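(* Let $M\ge1$, $b>0$, let $A_2=\{z\in\mathbb{R}^M:\sum_iz_i\ge0\}$, and let $N_M(z;\nu,\Sigma)$ denote the $M$-variate normal density with mean $\nu$ and covariance $\Sigma$. If $0<\beta\le\beta'$ satisfy $\beta/\beta'\ge M^{-1/M}$, then $$\int_{A_2}\min\{N_M(z;b\mathbf{1}_M,\beta^{-1}I_M),\,N_M(z;b\mathbf{1}_M,\beta'^{-1}I_M)\}\,dz\;\ge\;\frac{1}{\sqrt M}\,\Phi(b\sqrt M\,\beta'^{1/2})\;\ge\;\frac{1}{2\sqrt M},$$ where $\Phi$ is the standard normal distribution function and $\mathbf{1}_M$ is the all-ones vector. Consequently, for the symmetric truncated mixture $\tilde\pi(z)\propto N_M(z;-b\mathbf{1}_M,I_M)\mathbf{1}_{A_1}(z)+N_M(z;b\mathbf{1}_M,I_M)\mathbf{1}_{A_2}(z)$ (with $A_1=\mathbb{R}^M\setminus A_2$), $N=M$, $\beta_k=M^{-(M-k)/M}$ and $\pi_k\propto\tilde\pi^{\beta_k}$, one has $\int_{\mathbb{R}^M}\min\{\pi_k,\pi_{k+1}\}\,dz\ge\frac{1}{2\sqrt M}$ for all $k\in\{0,\dots,N-1\}$.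
   Context: Lebesgue measure on $\mathbb{R}^M$; $I_M$ is the $M\times M$ identity matrix. *)

theory Defs
  imports "HOL-Analysis.Analysis" "HOL-Probability.Probability"
begin

definition mvn_density :: "real^'n \<Rightarrow> real^'n \<Rightarrow> real^'n^'n \<Rightarrow> real" where
  "mvn_density z \<nu> \<Sigma> =
     (2 * pi) powr (- real CARD('n) / 2) * (det \<Sigma>) powr (- 1 / 2)
       * exp (- (1 / 2) * ((z - \<nu>) \<bullet> (matrix_inv \<Sigma> *v (z - \<nu>))))"

definition std_normal_cdf :: "real \<Rightarrow> real" where
  "std_normal_cdf x = (LINT t:{..x}|lborel. std_normal_density t)"

definition ones :: "real^'n" where "ones = (\<chi> i. 1)"

definition A2 :: "(real^'n) set" where "A2 = {z. (\<Sum>i\<in>UNIV. z $ i) \<ge> 0}"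

definition A1 :: "(real^'n) set" where "A1 = UNIV - A2"

text \<open>Unnormalised symmetric truncated mixture (normalising constant cancels in pi_k).\<close>
definition tilde_pi :: "real \<Rightarrow> real^'n \<Rightarrow> real" where
  "tilde_pi b z = mvn_density z (- (b *\<^sub>R ones)) (mat 1) * indicator A1 z
                + mvn_density z (b *\<^sub>R ones) (mat 1) * indicator A2 z"

definition beta_seq :: "nat \<Rightarrow> nat \<Rightarrow> real" where
  "beta_seq M k = real M powr (- (real M - real k) / real M)"

definition pi_k :: "real \<Rightarrow> nat \<Rightarrow> real^'n \<Rightarrow> real" where
  "pi_k b k (z :: real^'n) = tilde_pi b z powr beta_seq CARD('n) k
                / (LINT (y :: real^'n)|lborel. tilde_pi b y powr beta_seq CARD('n) k)"

end

theory Submission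
  imports Defs
begin


lemma scaleR_mat1: "(c::real) *\<^sub>R (mat 1 :: real^'n^'n) = mat c"
  by (simp add: vec_eq_iff mat_def)

lemma det_scaled_id: "det ((c::real) *\<^sub>R (mat 1 :: real^'n^'n)) = c ^ CARD('n)"
  by (metis scaleR_mat1 matrix_scaleR det_matrix_scaleR)

lemma matrix_inv_scaled_id:
  assumes "(c::real) \<noteq> 0"
  shows "matrix_inv (c *\<^sub>R (mat 1 :: real^'n^'n)) = (1/c) *\<^sub>R mat 1"
proof -
  let ?A = "c *\<^sub>R (mat 1 :: real^'n^'n)"
  have ex: "?A ** ((1/c) *\<^sub>R mat 1) = mat 1 \<and> ((1/c) *\<^sub>R mat 1) ** ?A = mat 1"
    using assms by (simp add: scalar_matrix_assoc[symmetric] matrix_scalar_ac)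
  have "?A ** matrix_inv ?A = mat 1 \<and> matrix_inv ?A ** ?A = mat 1"
    unfolding matrix_inv_def by (rule someI_ex) (use ex in blast)
  hence h: "?A ** matrix_inv ?A = mat 1" by blast
  have "matrix_inv ?A = ((1/c) *\<^sub>R mat 1) ** (?A ** matrix_inv ?A)"
    using ex by (simp add: matrix_mul_assoc)
  also have "\<dots> = (1/c) *\<^sub>R mat 1" using h by simp
  finally show ?thesis .
qed





lemma mvn_scaled:
  assumes c: "(c::real) > 0"
  shows "mvn_density z \<nu> (c *\<^sub>R (mat 1 :: real^'n^'n)) =
     (2*pi*c) powr (- real CARD('n) / 2) * exp (- ((norm (z - \<nu>))^2) / (2*c))"
proof -
  have d: "det (c *\<^sub>R (mat 1 :: real^'n^'n)) powr (-1/2) = c powr (- real CARD('n) / 2)"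
    using c by (simp add: det_scaled_id powr_realpow[symmetric] powr_powr)
  have q: "(z - \<nu>) \<bullet> (matrix_inv (c *\<^sub>R (mat 1 :: real^'n^'n)) *v (z - \<nu>)) = (norm (z-\<nu>))^2 / c"
    using c by (simp add: matrix_inv_scaled_id scaleR_matrix_vector_assoc[symmetric] power2_norm_eq_inner)
  show ?thesis
    unfolding mvn_density_def d q using c
    by (simp add: powr_mult)
qed

lemma ones_Basis: "b \<in> Basis \<Longrightarrow> (ones :: real^'n) \<bullet> b = 1"
  by (auto simp: Basis_vec_def ones_def inner_axis)

lemma sum_vec_eq_inner: "(\<Sum>i\<in>UNIV. (z::real^'n) $ i) = z \<bullet> ones"
  by (simp add: inner_vec_def ones_def)

lemma mvn_prod:
  assumes c: "(c::real) > 0"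
  shows "mvn_density z (m *\<^sub>R ones) (c *\<^sub>R (mat 1 :: real^'n^'n)) =
     (\<Prod>b\<in>Basis. normal_density m (sqrt c) (z \<bullet> b))"
proof -
  have nb: "(norm (z - m *\<^sub>R ones))^2 = (\<Sum>b\<in>Basis. (z \<bullet> b - m)^2)"
  proof -
    have "(norm (z - m *\<^sub>R ones))^2 = (z - m *\<^sub>R ones) \<bullet> (z - m *\<^sub>R ones)"
      by (simp add: power2_norm_eq_inner)
    also have "\<dots> = (\<Sum>b\<in>Basis. ((z - m *\<^sub>R ones) \<bullet> b) * ((z - m *\<^sub>R ones) \<bullet> b))"
      by (rule euclidean_inner)
    also have "\<dots> = (\<Sum>b\<in>Basis. (z \<bullet> b - m)^2)"
      by (rule sum.cong) (simp_all add: inner_diff_left ones_Basis power2_eq_square)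
    finally show ?thesis .
  qed
  have "(\<Prod>b\<in>Basis. normal_density m (sqrt c) (z \<bullet> b)) =
        (\<Prod>b\<in>(Basis::(real^'n) set). 1 / sqrt (2*pi*c) * exp (- ((z \<bullet> b - m)^2) / (2*c)))"
    using c by (simp add: normal_density_def)
  also have "\<dots> = (1 / sqrt (2*pi*c)) ^ CARD('n) * exp (\<Sum>b\<in>(Basis::(real^'n) set). - ((z \<bullet> b - m)^2) / (2*c))"
    unfolding prod.distrib exp_sum prod_constant by (simp add: exp_sum)
  also have "(1 / sqrt (2*pi*c)) ^ CARD('n) = (2*pi*c) powr (- real CARD('n) / 2)"
  proof -
    have "1 / sqrt (2*pi*c) = (2*pi*c) powr (-1/2)"
      using c by (simp add: powr_minus_divide powr_half_sqrt)
    thus ?thesis using c by (simp add: powr_realpow[symmetric] powr_powr)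
  qed
  finally show ?thesis
    unfolding mvn_scaled[OF c] nb
    by (simp add: sum_divide_distrib[symmetric] sum_negf)
qed



definition N1 :: "real \<Rightarrow> real \<Rightarrow> real measure" where
  "N1 m s = density lborel (\<lambda>x. ennreal (normal_density m s x))"

lemma prob_N1: "s > 0 \<Longrightarrow> prob_space (N1 m s)"
  unfolding N1_def by (rule prob_space_normal_density)

lemma sets_N1[simp, measurable_cong]: "sets (N1 m s) = sets borel"
  by (simp add: N1_def)

lemma space_N1[simp]: "space (N1 m s) = UNIV"
  by (simp add: N1_def)

lemma indicator_PiE_prod:
  assumes "f \<in> extensional I" "finite I"
  shows "(indicator (Pi\<^sub>E I A) f :: ennreal) = (\<Prod>i\<in>I. indicator (A i) (f i))"
proof (cases "f \<in> Pi\<^sub>E I A")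
  case True thus ?thesis by (auto simp: indicator_def PiE_def intro!: prod.neutral)
next
  case False
  then obtain i where "i \<in> I" "f i \<notin> A i" using assms(1) by (auto simp: PiE_def Pi_def)
  then show ?thesis using False assms(2) by (auto simp: indicator_def intro!: prod_zero)
qed

lemma PiM_density_eq:
  fixes m s :: real
  assumes s: "s > 0"
  shows "density (PiM (Basis::'a::euclidean_space set) (\<lambda>_. lborel))
           (\<lambda>f. \<Prod>b\<in>Basis. ennreal (normal_density m s (f b)))
       = PiM Basis (\<lambda>_. N1 m s)"
proof -
  interpret N: product_sigma_finite "\<lambda>_::'a. N1 m s"
    by (simp add: product_sigma_finite_def prob_space_imp_sigma_finite prob_N1 s)
  interpret L: product_sigma_finite "\<lambda>_::'a. (lborel :: real measure)"
    by (simp add: product_sigma_finite_def sigma_finite_lborel)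
  show ?thesis
  proof (rule N.PiM_eqI)
    show "finite (Basis::'a set)" by simp
    show "sets (density (PiM (Basis::'a set) (\<lambda>_. lborel)) (\<lambda>f. \<Prod>b\<in>Basis. ennreal (normal_density m s (f b))))
          = sets (PiM (Basis::'a set) (\<lambda>_. N1 m s))"
      unfolding sets_density by (rule sets_PiM_cong) auto
    fix A assume A: "\<And>i. i \<in> (Basis::'a set) \<Longrightarrow> A i \<in> sets (N1 m s)"
    have AS: "Pi\<^sub>E Basis A \<in> sets (PiM (Basis::'a set) (\<lambda>_. lborel))"
      using A by (intro sets_PiM_I_finite) auto
    have "emeasure (density (PiM (Basis::'a set) (\<lambda>_. lborel)) (\<lambda>f. \<Prod>b\<in>Basis. ennreal (normal_density m s (f b)))) (Pi\<^sub>E Basis A)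
       = (\<integral>\<^sup>+f. (\<Prod>b\<in>Basis. ennreal (normal_density m s (f b))) * indicator (Pi\<^sub>E Basis A) f \<partial>PiM (Basis::'a set) (\<lambda>_. lborel))"
      by (rule emeasure_density[OF _ AS]) measurable
    also have "\<dots> = (\<integral>\<^sup>+f. (\<Prod>b\<in>Basis. ennreal (normal_density m s (f b)) * indicator (A b) (f b)) \<partial>PiM (Basis::'a set) (\<lambda>_. lborel))"
    proof (intro nn_integral_cong)
      fix f assume "f \<in> space (PiM (Basis::'a set) (\<lambda>_. (lborel::real measure)))"
      hence "f \<in> extensional Basis" by (simp add: space_PiM PiE_def)
      thus "(\<Prod>b\<in>Basis. ennreal (normal_density m s (f b))) * indicator (Pi\<^sub>E Basis A) f
          = (\<Prod>b\<in>Basis. ennreal (normal_density m s (f b)) * indicator (A b) (f b))"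
        by (simp only: indicator_PiE_prod[OF _ finite_Basis] prod.distrib)
    qed
    also have "\<dots> = (\<Prod>b\<in>Basis. (\<integral>\<^sup>+x. ennreal (normal_density m s x) * indicator (A b) x \<partial>lborel))"
      by (rule L.product_nn_integral_prod) (use A in auto)
    also have "\<dots> = (\<Prod>b\<in>Basis. emeasure (N1 m s) (A b))"
    proof (intro prod.cong refl)
      fix b assume "b \<in> (Basis::'a set)"
      thus "(\<integral>\<^sup>+x. ennreal (normal_density m s x) * indicator (A b) x \<partial>lborel) = emeasure (N1 m s) (A b)"
        unfolding N1_def using A by (subst emeasure_density) auto
    qed
    finally show "emeasure (density (PiM (Basis::'a set) (\<lambda>_. lborel)) (\<lambda>f. \<Prod>b\<in>Basis. ennreal (normal_density m s (f b)))) (Pi\<^sub>E Basis A)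
       = (\<Prod>b\<in>Basis. emeasure (N1 m s) (A b))" .
  qed
qed



lemma mvn_measurable[measurable]:
  assumes "c > 0"
  shows "(\<lambda>z. mvn_density z \<nu> (c *\<^sub>R (mat 1 :: real^'n^'n))) \<in> borel_measurable borel"
  unfolding mvn_scaled[OF assms] by measurable

lemma inner_sum_Basis_eq: "b \<in> Basis \<Longrightarrow> (\<Sum>b'\<in>Basis. f b' *\<^sub>R b') \<bullet> b = (f b :: real)"
  for b :: "'a::euclidean_space"
  by (simp add: inner_sum_left inner_Basis if_distrib sum.delta cong: if_cong)

lemma Gdens_eq:
  assumes c: "c > 0"
  shows "density lborel (\<lambda>z::real^'n. ennreal (mvn_density z (m *\<^sub>R ones) (c *\<^sub>R mat 1)))
       = distr (PiM (Basis :: (real^'n) set) (\<lambda>_. N1 m (sqrt c))) borel (\<lambda>f. \<Sum>b\<in>Basis. f b *\<^sub>R b)"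
proof -
  let ?h = "\<lambda>z::real^'n. ennreal (mvn_density z (m *\<^sub>R ones) (c *\<^sub>R mat 1))"
  let ?S = "\<lambda>f. \<Sum>b\<in>(Basis :: (real^'n) set). f b *\<^sub>R b"
  have hm: "?h \<in> borel_measurable borel" using c by measurable
  have Sm: "?S \<in> measurable (PiM (Basis :: (real^'n) set) (\<lambda>_. lborel)) borel" by measurable
  have "density lborel ?h = density (distr (PiM (Basis :: (real^'n) set) (\<lambda>_. lborel)) borel ?S) ?h"
    by (simp only: lborel_eq[where 'a="real^'n"])
  also have "\<dots> = distr (density (PiM (Basis :: (real^'n) set) (\<lambda>_. lborel)) (\<lambda>f. ?h (?S f))) borel ?S"
    by (rule density_distr[OF hm Sm])
  also have "density (PiM (Basis :: (real^'n) set) (\<lambda>_. lborel)) (\<lambda>f. ?h (?S f))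
     = density (PiM (Basis :: (real^'n) set) (\<lambda>_. lborel)) (\<lambda>f. \<Prod>b\<in>Basis. ennreal (normal_density m (sqrt c) (f b)))"
  proof (rule density_cong)
    show "(\<lambda>f. ?h (?S f)) \<in> borel_measurable (PiM (Basis :: (real^'n) set) (\<lambda>_. lborel))"
      using hm Sm by measurable
    show "(\<lambda>f. \<Prod>b\<in>Basis. ennreal (normal_density m (sqrt c) (f b))) \<in> borel_measurable (PiM (Basis :: (real^'n) set) (\<lambda>_. lborel))"
      by measurable
    show "AE f in PiM (Basis :: (real^'n) set) (\<lambda>_. lborel). ?h (?S f) = (\<Prod>b\<in>Basis. ennreal (normal_density m (sqrt c) (f b)))"
      using c by (intro AE_I2) (simp add: mvn_prod inner_sum_Basis_eq prod_ennreal)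
  qed
  also have "\<dots> = PiM (Basis :: (real^'n) set) (\<lambda>_. N1 m (sqrt c))"
    using c by (intro PiM_density_eq) simp
  finally show ?thesis .
qed



lemma sum_distributed:
  fixes m c :: real
  assumes c: "c > 0"
  defines "P \<equiv> PiM (Basis :: (real^'n) set) (\<lambda>_. N1 m (sqrt c))"
  shows "prob_space P"
    and "distributed P lborel (\<lambda>f. \<Sum>b\<in>(Basis :: (real^'n) set). f b)
           (\<lambda>x. ennreal (normal_density (real CARD('n) * m) (sqrt (real CARD('n) * c)) x))"
proof -
  have sc: "sqrt c > 0" using c by simp
  interpret PP: product_prob_space "\<lambda>_::real^'n. N1 m (sqrt c)" "Basis :: (real^'n) set"
    using prob_N1[OF sc] by (simp add: product_prob_space_def product_sigma_finite_def product_prob_space_axioms_def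
        prob_space_imp_sigma_finite)
  show PS: "prob_space P" unfolding P_def by (rule prob_space_PiM) (rule prob_N1[OF sc])
  interpret PS: prob_space P by (rule PS)
  have comp: "distr P borel (\<lambda>f. f b) = N1 m (sqrt c)" if b: "b \<in> (Basis :: (real^'n) set)" for b
  proof -
    have "distr P borel (\<lambda>f. f b) = distr P (N1 m (sqrt c)) (\<lambda>f. f b)"
      by (rule distr_cong) auto
    also have "\<dots> = N1 m (sqrt c)" unfolding P_def by (rule PP.PiM_component[OF b])
    finally show ?thesis .
  qed
  have ind: "PS.indep_vars (\<lambda>_. borel) (\<lambda>b f. f b) (Basis :: (real^'n) set)"
  proof (subst PS.indep_vars_iff_distr_eq_PiM')
    show "(Basis :: (real^'n) set) \<noteq> {}" by simp
    show "(\<lambda>f. f b) \<in> measurable P borel" if "b \<in> (Basis :: (real^'n) set)" for b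
    proof -
      have "(\<lambda>f. f b) \<in> measurable P (N1 m (sqrt c))"
        unfolding P_def by (rule measurable_component_singleton[OF that])
      thus ?thesis by (simp add: measurable_cong_sets[OF refl sets_N1])
    qed
    have "distr P (PiM (Basis :: (real^'n) set) (\<lambda>_. borel)) (\<lambda>x. \<lambda>i\<in>Basis. x i) = distr P P (\<lambda>x. x)"
    proof (rule distr_cong)
      show "sets (PiM (Basis :: (real^'n) set) (\<lambda>_. borel)) = sets P"
        unfolding P_def by (rule sets_PiM_cong) auto
      show "x \<in> space P \<Longrightarrow> restrict x Basis = x" for x
        unfolding P_def by (auto simp: space_PiM PiE_def extensional_restrict)
    qed simp
    also have "\<dots> = P" by (rule distr_id2) simp
    also have "\<dots> = PiM (Basis :: (real^'n) set) (\<lambda>i. distr P borel (\<lambda>x. x i))"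
      unfolding P_def by (rule PiM_cong) (simp_all add: comp[unfolded P_def])
    finally show "distr P (PiM (Basis :: (real^'n) set) (\<lambda>_. borel)) (\<lambda>x. \<lambda>i\<in>Basis. x i)
        = PiM (Basis :: (real^'n) set) (\<lambda>i. distr P borel (\<lambda>x. x i))" .
  qed
  have dist1: "distributed P lborel (\<lambda>f. f b) (\<lambda>x. ennreal (normal_density m (sqrt c) x))"
    if b: "b \<in> (Basis :: (real^'n) set)" for b
  proof -
    have "distr P lborel (\<lambda>f. f b) = distr P borel (\<lambda>f. f b)"
      by (rule distr_cong) auto
    also have "\<dots> = density lborel (\<lambda>x. ennreal (normal_density m (sqrt c) x))"
      using comp[OF b] by (simp add: N1_def)
    finally show ?thesis unfolding distributed_def using b unfolding P_def by simp
  qed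
  have "distributed P lborel (\<lambda>f. \<Sum>b\<in>(Basis :: (real^'n) set). f b)
     (\<lambda>x. ennreal (normal_density (\<Sum>b\<in>(Basis :: (real^'n) set). m) (sqrt (\<Sum>b\<in>(Basis :: (real^'n) set). (sqrt c)\<^sup>2)) x))"
    by (rule PS.sum_indep_normal[of "Basis :: (real^'n) set" "\<lambda>b f. f b"]) (use ind dist1 sc in auto)
  thus "distributed P lborel (\<lambda>f. \<Sum>b\<in>(Basis :: (real^'n) set). f b)
           (\<lambda>x. ennreal (normal_density (real CARD('n) * m) (sqrt (real CARD('n) * c)) x))"
    using c by simp
qed



lemma cdf_enn: "std_normal_cdf t = enn2real (\<integral>\<^sup>+x. ennreal (std_normal_density x) * indicator {..t} x \<partial>lborel)"
proof -
  have "std_normal_cdf t = (\<integral>x. indicator {..t} x *\<^sub>R std_normal_density x \<partial>lborel)"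
    by (simp add: std_normal_cdf_def set_lebesgue_integral_def)
  also have "\<dots> = enn2real (\<integral>\<^sup>+x. ennreal (indicator {..t} x *\<^sub>R std_normal_density x) \<partial>lborel)"
    by (rule integral_eq_nn_integral) auto
  also have "(\<integral>\<^sup>+x. ennreal (indicator {..t} x *\<^sub>R std_normal_density x) \<partial>lborel)
     = (\<integral>\<^sup>+x. ennreal (std_normal_density x) * indicator {..t} x \<partial>lborel)"
    by (intro nn_integral_cong) (auto simp: indicator_def)
  finally show ?thesis .
qed

lemma Phi_from_dist:
  assumes PS: "prob_space M" and X: "distributed M lborel X (\<lambda>x. ennreal (normal_density \<mu> \<sigma> x))"
    and s: "\<sigma> > 0"
  shows "measure M {x\<in>space M. X x \<ge> 0} = std_normal_cdf (\<mu>/\<sigma>)"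
    and "measure M {x\<in>space M. X x < 0} = std_normal_cdf (-\<mu>/\<sigma>)"
proof -
  interpret prob_space M by (rule PS)
  have Y: "distributed M lborel (\<lambda>x. \<mu>/\<sigma> + (-1/\<sigma>) * X x) (\<lambda>x. ennreal (std_normal_density x))"
    using normal_density_affine[OF X s, of "-1/\<sigma>" "\<mu>/\<sigma>"] s by (simp add: field_simps)
  have "{x\<in>space M. X x \<ge> 0} = (\<lambda>x. \<mu>/\<sigma> + (-1/\<sigma>) * X x) -` {..\<mu>/\<sigma>} \<inter> space M"
    using s by (auto simp: field_simps zero_le_mult_iff)
  hence "emeasure M {x\<in>space M. X x \<ge> 0} = (\<integral>\<^sup>+x. ennreal (std_normal_density x) * indicator {..\<mu>/\<sigma>} x \<partial>lborel)"
    using distributed_emeasure[OF Y, of "{..\<mu>/\<sigma>}"] by simp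
  thus "measure M {x\<in>space M. X x \<ge> 0} = std_normal_cdf (\<mu>/\<sigma>)"
    by (simp add: measure_def cdf_enn)
  have Y': "distributed M lborel (\<lambda>x. -\<mu>/\<sigma> + (1/\<sigma>) * X x) (\<lambda>x. ennreal (std_normal_density x))"
    using normal_density_affine[OF X s, of "1/\<sigma>" "-\<mu>/\<sigma>"] s by (simp add: field_simps)
  have "{x\<in>space M. X x < 0} = (\<lambda>x. -\<mu>/\<sigma> + (1/\<sigma>) * X x) -` {..<-\<mu>/\<sigma>} \<inter> space M"
    using s by (auto simp: field_simps mult_less_0_iff)
  hence "emeasure M {x\<in>space M. X x < 0} = (\<integral>\<^sup>+x. ennreal (std_normal_density x) * indicator {..<-\<mu>/\<sigma>} x \<partial>lborel)"
    using distributed_emeasure[OF Y', of "{..<-\<mu>/\<sigma>}"] by simp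
  also have "\<dots> = (\<integral>\<^sup>+x. ennreal (std_normal_density x) * indicator {..-\<mu>/\<sigma>} x \<partial>lborel)"
    by (intro nn_integral_cong_AE, rule AE_mp[OF AE_lborel_singleton[of "-\<mu>/\<sigma>"]])
       (auto simp: indicator_def)
  finally show "measure M {x\<in>space M. X x < 0} = std_normal_cdf (-\<mu>/\<sigma>)"
    by (simp add: measure_def cdf_enn)
qed

lemma Phi_zero: "std_normal_cdf 0 = 1/2"
proof -
  let ?M = "density lborel (\<lambda>x. ennreal (std_normal_density x))"
  have PS: "prob_space ?M" by (rule prob_space_normal_density) simp
  interpret prob_space ?M by (rule PS)
  have D: "distributed ?M lborel (\<lambda>x. x) (\<lambda>x. ennreal (normal_density 0 1 x))"
    unfolding distributed_def by (simp add: distr_id2)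
  have a: "measure ?M {x\<in>space ?M. x \<ge> 0} = std_normal_cdf 0"
    using Phi_from_dist(1)[OF PS D zero_less_one] by simp
  have b: "measure ?M {x\<in>space ?M. x < 0} = std_normal_cdf 0"
    using Phi_from_dist(2)[OF PS D zero_less_one] by simp
  have "{x\<in>space ?M. x < 0} = space ?M - {x\<in>space ?M. x \<ge> 0}" by auto
  moreover have ev: "{x\<in>space ?M. x \<ge> 0} \<in> events" by measurable
  ultimately have "measure ?M {x\<in>space ?M. x < 0} = 1 - measure ?M {x\<in>space ?M. x \<ge> 0}"
    using prob_compl[OF ev] by simp
  with a b show ?thesis by simp
qed

lemma Phi_mono:
  assumes "s \<le> t" shows "std_normal_cdf s \<le> std_normal_cdf t"
  unfolding std_normal_cdf_def set_lebesgue_integral_def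
proof (rule integral_mono)
  show "integrable lborel (\<lambda>x. indicator {..s} x *\<^sub>R std_normal_density x)"
    by (rule integrable_mult_indicator) auto
  show "integrable lborel (\<lambda>x. indicator {..t} x *\<^sub>R std_normal_density x)"
    by (rule integrable_mult_indicator) auto
  show "indicator {..s} x *\<^sub>R std_normal_density x \<le> indicator {..t} x *\<^sub>R std_normal_density x" for x
    using assms by (auto simp: indicator_def)
qed

lemma Phi_ge_half: "t \<ge> 0 \<Longrightarrow> std_normal_cdf t \<ge> 1/2"
  using Phi_mono[of 0 t] Phi_zero by simp



lemma A2_borel[measurable]: "(A2 :: (real^'n) set) \<in> sets borel"
  unfolding A2_def sum_vec_eq_inner
  by (intro borel_closed closed_Collect_le continuous_intros)

lemma A1_borel[measurable]: "(A1 :: (real^'n) set) \<in> sets borel"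
  unfolding A1_def by measurable

lemma mvn_nonneg: "c > 0 \<Longrightarrow> mvn_density z \<nu> (c *\<^sub>R (mat 1 :: real^'n^'n)) \<ge> 0"
  by (simp add: mvn_scaled)

lemma mvn_pos: "c > 0 \<Longrightarrow> mvn_density z \<nu> (c *\<^sub>R (mat 1 :: real^'n^'n)) > 0"
  by (simp add: mvn_scaled)

lemma sum_basis_ones: "(\<Sum>b\<in>Basis. f b *\<^sub>R b) \<bullet> (ones::real^'n) = (\<Sum>b\<in>Basis. f b)"
proof -
  have "(\<Sum>b\<in>Basis. f b *\<^sub>R b) \<bullet> (ones::real^'n) = (\<Sum>b\<in>Basis. f b * (b \<bullet> ones))"
    by (simp add: inner_sum_left)
  also have "\<dots> = (\<Sum>b\<in>Basis. f b)"
    by (intro sum.cong refl) (simp add: inner_commute[of _ ones] ones_Basis)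
  finally show ?thesis .
qed

lemma set_int_density:
  assumes f: "f \<in> borel_measurable borel" "\<And>z. f z \<ge> 0" and S: "S \<in> sets borel"
  shows "(LINT z:S|lborel. f z) = measure (density lborel (\<lambda>z. ennreal (f z))) S"
proof -
  have "(LINT z:S|lborel. f z) = enn2real (\<integral>\<^sup>+z. ennreal (indicator S z *\<^sub>R f z) \<partial>lborel)"
    unfolding set_lebesgue_integral_def using f S by (intro integral_eq_nn_integral) auto
  also have "(\<integral>\<^sup>+z. ennreal (indicator S z *\<^sub>R f z) \<partial>lborel) = (\<integral>\<^sup>+z. ennreal (f z) * indicator S z \<partial>lborel)"
    by (intro nn_integral_cong) (auto simp: indicator_def)
  also have "\<dots> = emeasure (density lborel (\<lambda>z. ennreal (f z))) S"
    using f S by (subst emeasure_density) auto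
  finally show ?thesis by (simp add: measure_def)
qed

lemma gauss_facts:
  fixes m c :: real
  assumes c: "c > 0"
  shows "integrable lborel (\<lambda>z::real^'n. mvn_density z (m *\<^sub>R ones) (c *\<^sub>R mat 1))"
    and "(LINT z:(A2::(real^'n) set)|lborel. mvn_density z (m *\<^sub>R ones) (c *\<^sub>R mat 1))
           = std_normal_cdf (real CARD('n) * m / sqrt (real CARD('n) * c))"
    and "(LINT z:(A1::(real^'n) set)|lborel. mvn_density z (m *\<^sub>R ones) (c *\<^sub>R mat 1))
           = std_normal_cdf (- (real CARD('n) * m) / sqrt (real CARD('n) * c))"
proof -
  let ?N = "\<lambda>z::real^'n. mvn_density z (m *\<^sub>R ones) (c *\<^sub>R mat 1)"
  let ?P = "PiM (Basis :: (real^'n) set) (\<lambda>_. N1 m (sqrt c))"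
  let ?S = "\<lambda>f. \<Sum>b\<in>(Basis :: (real^'n) set). f b *\<^sub>R b"
  have G: "density lborel (\<lambda>z. ennreal (?N z)) = distr ?P borel ?S" by (rule Gdens_eq[OF c])
  have PS: "prob_space ?P" by (rule sum_distributed(1)[OF c])
  have D: "distributed ?P lborel (\<lambda>f. \<Sum>b\<in>(Basis :: (real^'n) set). f b)
           (\<lambda>x. ennreal (normal_density (real CARD('n) * m) (sqrt (real CARD('n) * c)) x))"
    by (rule sum_distributed(2)[OF c])
  have Sm: "?S \<in> measurable ?P borel" by measurable
  have sig: "sqrt (real CARD('n) * c) > 0" using c by simp
  have Nm: "?N \<in> borel_measurable borel" using c by measurable
  have meas: "(LINT z:S|lborel. ?N z) = measure ?P (?S -` S \<inter> space ?P)" if S: "S \<in> sets borel" for S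
  proof -
    have "(LINT z:S|lborel. ?N z) = measure (density lborel (\<lambda>z. ennreal (?N z))) S"
      by (rule set_int_density[OF Nm mvn_nonneg[OF c] S])
    also have "\<dots> = measure ?P (?S -` S \<inter> space ?P)"
      unfolding G by (rule measure_distr[OF Sm S])
    finally show ?thesis .
  qed
  have "(\<integral>\<^sup>+z. ennreal (?N z) \<partial>lborel) = emeasure (density lborel (\<lambda>z. ennreal (?N z))) UNIV"
    using Nm by (subst emeasure_density) auto
  also have "\<dots> = emeasure ?P (?S -` UNIV \<inter> space ?P)"
    unfolding G by (rule emeasure_distr[OF Sm]) simp
  also have "\<dots> = 1" using prob_space.emeasure_space_1[OF PS] by simp
  finally show "integrable lborel ?N"
    using Nm by (intro integrableI_nonneg) (auto simp: mvn_nonneg[OF c])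
  have e2: "?S -` A2 \<inter> space ?P = {f\<in>space ?P. (\<Sum>b\<in>(Basis :: (real^'n) set). f b) \<ge> 0}"
    by (auto simp: A2_def sum_vec_eq_inner sum_basis_ones)
  show "(LINT z:(A2::(real^'n) set)|lborel. ?N z)
           = std_normal_cdf (real CARD('n) * m / sqrt (real CARD('n) * c))"
    unfolding meas[OF A2_borel] e2 by (rule Phi_from_dist(1)[OF PS D sig])
  have e1: "?S -` A1 \<inter> space ?P = {f\<in>space ?P. (\<Sum>b\<in>(Basis :: (real^'n) set). f b) < 0}"
    by (auto simp: A1_def A2_def sum_vec_eq_inner sum_basis_ones)
  show "(LINT z:(A1::(real^'n) set)|lborel. ?N z)
           = std_normal_cdf (- (real CARD('n) * m) / sqrt (real CARD('n) * c))"
    unfolding meas[OF A1_borel] e1 by (rule Phi_from_dist(2)[OF PS D sig])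
qed



lemma ptwise:
  fixes \<beta> \<beta>' :: real and z \<nu> :: "real^'n"
  assumes b: "0 < \<beta>" "\<beta> \<le> \<beta>'"
  shows "(\<beta>/\<beta>') powr (real CARD('n)/2) * mvn_density z \<nu> ((1/\<beta>') *\<^sub>R mat 1)
         \<le> mvn_density z \<nu> ((1/\<beta>) *\<^sub>R mat 1)"
proof -
  define a where "a = real CARD('n) / 2"
  define d where "d = (norm (z - \<nu>))^2"
  have b': "0 < \<beta>'" using b by simp
  have d0: "d \<ge> 0" by (simp add: d_def)
  have e: "exp (- d / (2 * (1/\<beta>'))) \<le> exp (- d / (2 * (1/\<beta>)))"
    using b b' d0 by (simp add: mult_left_mono)
  have k: "(\<beta>/\<beta>') powr a * (2*pi*(1/\<beta>')) powr (-a) = (2*pi*(1/\<beta>)) powr (-a)"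
    using b b' by (simp add: powr_def ln_mult ln_div exp_add[symmetric] algebra_simps)
  have "(\<beta>/\<beta>') powr a * mvn_density z \<nu> ((1/\<beta>') *\<^sub>R mat 1)
      = ((\<beta>/\<beta>') powr a * (2*pi*(1/\<beta>')) powr (-a)) * exp (- d / (2 * (1/\<beta>')))"
    using b' by (simp add: mvn_scaled a_def d_def)
  also have "\<dots> = (2*pi*(1/\<beta>)) powr (-a) * exp (- d / (2 * (1/\<beta>')))" by (simp only: k)
  also have "\<dots> \<le> (2*pi*(1/\<beta>)) powr (-a) * exp (- d / (2 * (1/\<beta>)))"
    by (rule mult_left_mono[OF e]) simp
  also have "\<dots> = mvn_density z \<nu> ((1/\<beta>) *\<^sub>R mat 1)"
    using b by (simp add: mvn_scaled a_def d_def)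
  finally show ?thesis by (simp add: a_def)
qed

lemma ratio_le1: "0 < \<beta> \<Longrightarrow> \<beta> \<le> \<beta>' \<Longrightarrow> (\<beta>/\<beta>') powr (real CARD('n)/2) \<le> 1"
  by (rule powr_le1) auto

lemma min_ptwise:
  fixes \<beta> \<beta>' :: real and z \<nu> :: "real^'n"
  assumes b: "0 < \<beta>" "\<beta> \<le> \<beta>'"
  shows "(\<beta>/\<beta>') powr (real CARD('n)/2) * mvn_density z \<nu> ((1/\<beta>') *\<^sub>R mat 1)
         \<le> min (mvn_density z \<nu> ((1/\<beta>) *\<^sub>R mat 1)) (mvn_density z \<nu> ((1/\<beta>') *\<^sub>R mat 1))"
proof -
  have "(\<beta>/\<beta>') powr (real CARD('n)/2) * mvn_density z \<nu> ((1/\<beta>') *\<^sub>R mat 1)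
       \<le> 1 * mvn_density z \<nu> ((1/\<beta>') *\<^sub>R mat 1)"
    using b by (intro mult_right_mono ratio_le1 mvn_nonneg) auto
  thus ?thesis using ptwise[OF b, of z \<nu>] by simp
qed

lemma core_integral:
  fixes \<beta> \<beta>' m :: real and S :: "(real^'n) set"
  assumes b: "0 < \<beta>" "\<beta> \<le> \<beta>'" and S: "S \<in> sets borel"
  shows "set_integrable lborel S (\<lambda>z. min (mvn_density z (m *\<^sub>R ones) ((1/\<beta>) *\<^sub>R mat 1))
                                        (mvn_density z (m *\<^sub>R ones) ((1/\<beta>') *\<^sub>R mat 1)))"
    and "(LINT z:S|lborel. min (mvn_density z (m *\<^sub>R ones) ((1/\<beta>) *\<^sub>R mat 1))
                               (mvn_density z (m *\<^sub>R ones) ((1/\<beta>') *\<^sub>R mat 1)))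
         \<ge> (\<beta>/\<beta>') powr (real CARD('n)/2) * (LINT z:S|lborel. mvn_density z (m *\<^sub>R ones) ((1/\<beta>') *\<^sub>R mat 1))"
proof -
  have b': "0 < \<beta>'" using b by simp
  let ?N = "\<lambda>z::real^'n. mvn_density z (m *\<^sub>R ones) ((1/\<beta>') *\<^sub>R mat 1)"
  let ?Nb = "\<lambda>z::real^'n. mvn_density z (m *\<^sub>R ones) ((1/\<beta>) *\<^sub>R mat 1)"
  have iN: "integrable lborel ?N" using gauss_facts(1)[where c="1/\<beta>'" and m=m] b' by simp
  have siN: "set_integrable lborel S ?N"
    unfolding set_integrable_def using S by (intro integrable_mult_indicator iN) auto
  have m0: "?Nb \<in> borel_measurable borel" by (rule mvn_measurable) (use b in simp)
  have m1: "?N \<in> borel_measurable borel" by (rule mvn_measurable) (use b' in simp)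
  show si: "set_integrable lborel S (\<lambda>z. min (?Nb z) (?N z))"
  proof (rule set_integrable_bound[OF siN])
    show "set_borel_measurable lborel S (\<lambda>z. min (?Nb z) (?N z))"
      unfolding set_borel_measurable_def using m0 m1 S by measurable
    show "AE x in lborel. x \<in> S \<longrightarrow> norm (min (?Nb x) (?N x)) \<le> norm (?N x)"
      using b b' by (intro AE_I2) (auto simp: mvn_nonneg)
  qed
  have "(LINT z:S|lborel. (\<beta>/\<beta>') powr (real CARD('n)/2) * ?N z) \<le> (LINT z:S|lborel. min (?Nb z) (?N z))"
    by (rule set_integral_mono) (use siN si min_ptwise[OF b] in auto)
  thus "(LINT z:S|lborel. min (?Nb z) (?N z)) \<ge> (\<beta>/\<beta>') powr (real CARD('n)/2) * (LINT z:S|lborel. ?N z)"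
    by simp
qed



lemma Phi_le1: "std_normal_cdf t \<le> 1"
proof -
  have "std_normal_cdf t \<le> (\<integral>x. std_normal_density x \<partial>lborel)"
    unfolding std_normal_cdf_def set_lebesgue_integral_def
  proof (rule integral_mono)
    show "integrable lborel (\<lambda>x. indicator {..t} x *\<^sub>R std_normal_density x)"
      by (rule integrable_mult_indicator) auto
  qed (auto simp: indicator_def)
  thus ?thesis by simp
qed

definition Kc :: "nat \<Rightarrow> real \<Rightarrow> real" where
  "Kc M \<beta> = (2*pi) powr (- real M * \<beta> / 2) / (2*pi*(1/\<beta>)) powr (- real M / 2)"

lemma Kc_pos: "\<beta> > 0 \<Longrightarrow> Kc M \<beta> > 0" by (simp add: Kc_def)

lemma mvnpow:
  assumes b: "\<beta> > 0"
  shows "mvn_density z \<nu> (mat 1 :: real^'n^'n) powr \<beta> = Kc CARD('n) \<beta> * mvn_density z \<nu> ((1/\<beta>) *\<^sub>R mat 1)"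
proof -
  define d where "d = (norm (z - \<nu>))^2"
  have m1: "mvn_density z \<nu> (mat 1 :: real^'n^'n) = (2*pi) powr (- real CARD('n) / 2) * exp (- d / 2)"
    using mvn_scaled[of 1 z \<nu>] by (simp add: d_def)
  have "mvn_density z \<nu> (mat 1 :: real^'n^'n) powr \<beta> = (2*pi) powr (- real CARD('n) * \<beta> / 2) * exp (- d * \<beta> / 2)"
    unfolding m1 by (simp add: powr_mult powr_powr powr_def exp_add[symmetric] algebra_simps)
  also have "\<dots> = Kc CARD('n) \<beta> * ((2*pi*(1/\<beta>)) powr (- real CARD('n) / 2) * exp (- d / (2 * (1/\<beta>))))"
    using b by (simp add: Kc_def)
  also have "\<dots> = Kc CARD('n) \<beta> * mvn_density z \<nu> ((1/\<beta>) *\<^sub>R mat 1)"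
    using b by (simp add: mvn_scaled d_def)
  finally show ?thesis .
qed

definition gfun :: "real \<Rightarrow> real \<Rightarrow> real^'n \<Rightarrow> real" where
  "gfun b \<beta> z = mvn_density z ((-b) *\<^sub>R ones) ((1/\<beta>) *\<^sub>R mat 1) * indicator A1 z
              + mvn_density z (b *\<^sub>R ones) ((1/\<beta>) *\<^sub>R mat 1) * indicator A2 z"

lemma tilde_pow:
  assumes b: "\<beta> > 0"
  shows "tilde_pi b z powr \<beta> = Kc CARD('n) \<beta> * gfun b \<beta> (z::real^'n)"
proof (cases "z \<in> A2")
  case True
  hence "z \<notin> A1" by (simp add: A1_def)
  with True show ?thesis using b by (simp add: tilde_pi_def gfun_def mvnpow)
next
  case False
  hence "z \<in> A1" by (simp add: A1_def)
  with False show ?thesis using b by (simp add: tilde_pi_def gfun_def mvnpow scaleR_minus_left)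
qed

lemma gfun_nonneg: "\<beta> > 0 \<Longrightarrow> gfun b \<beta> z \<ge> 0"
  by (simp add: gfun_def mvn_nonneg)

lemma set_to_mult: "(LINT z:S|lborel. f z) = (\<integral>z. f z * indicator S z \<partial>lborel)"
  for f :: "'a::euclidean_space \<Rightarrow> real"
  by (simp add: set_lebesgue_integral_def mult.commute)

lemma set_integrable_to_mult: "set_integrable lborel S f \<Longrightarrow> integrable lborel (\<lambda>z. f z * indicator S z)"
  for f :: "'a::euclidean_space \<Rightarrow> real"
  by (simp add: set_integrable_def mult.commute)

lemma gfun_int:
  assumes b: "\<beta> > 0"
  shows "integrable lborel (gfun b \<beta> :: real^'n \<Rightarrow> real)"
    and "(\<integral>z. gfun b \<beta> (z::real^'n) \<partial>lborel)
          = 2 * std_normal_cdf (real CARD('n) * b / sqrt (real CARD('n) * (1/\<beta>)))"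
proof -
  have c: "1/\<beta> > 0" using b by simp
  have i1: "integrable lborel (\<lambda>z::real^'n. mvn_density z ((-b) *\<^sub>R ones) ((1/\<beta>) *\<^sub>R mat 1) * indicator A1 z)"
    using gauss_facts(1)[OF c, of "-b"] by (intro integrable_real_mult_indicator) auto
  have i2: "integrable lborel (\<lambda>z::real^'n. mvn_density z (b *\<^sub>R ones) ((1/\<beta>) *\<^sub>R mat 1) * indicator A2 z)"
    using gauss_facts(1)[OF c, of "b"] by (intro integrable_real_mult_indicator) auto
  show "integrable lborel (gfun b \<beta> :: real^'n \<Rightarrow> real)"
    unfolding gfun_def[abs_def] using i1 i2 by (rule Bochner_Integration.integrable_add)
  have "(\<integral>z. gfun b \<beta> (z::real^'n) \<partial>lborel)
      = (LINT z:(A1::(real^'n) set)|lborel. mvn_density z ((-b) *\<^sub>R ones) ((1/\<beta>) *\<^sub>R mat 1))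
      + (LINT z:(A2::(real^'n) set)|lborel. mvn_density z (b *\<^sub>R ones) ((1/\<beta>) *\<^sub>R mat 1))"
    unfolding gfun_def set_to_mult using i1 i2 by (rule Bochner_Integration.integral_add)
  also have "\<dots> = 2 * std_normal_cdf (real CARD('n) * b / sqrt (real CARD('n) * (1/\<beta>)))"
    using gauss_facts(2)[OF c, of b, where 'n='n] gauss_facts(3)[OF c, of "-b", where 'n='n] by simp
  finally show "(\<integral>z. gfun b \<beta> (z::real^'n) \<partial>lborel)
          = 2 * std_normal_cdf (real CARD('n) * b / sqrt (real CARD('n) * (1/\<beta>)))" .
qed



lemma card_pos': "real CARD('n::finite) > 0" by simp

lemma r_bound:
  fixes \<beta> \<beta>' :: real
  assumes b: "0 < \<beta>" "\<beta> \<le> \<beta>'" and r: "\<beta>/\<beta>' \<ge> real M powr (- 1 / real M)" and M: "M \<ge> 1"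
  shows "(\<beta>/\<beta>') powr (real M / 2) \<ge> 1 / sqrt (real M)"
proof -
  have "(real M powr (- 1 / real M)) powr (real M / 2) \<le> (\<beta>/\<beta>') powr (real M / 2)"
    by (rule powr_mono2) (use r in auto)
  moreover have "(real M powr (- 1 / real M)) powr (real M / 2) = 1 / sqrt (real M)"
  proof -
    have e: "(- 1 / real M) * (real M / 2) = - (1/2)" using M by simp
    have "(real M powr (- 1 / real M)) powr (real M / 2) = real M powr (- (1/2))"
      by (simp only: powr_powr e)
    also have "\<dots> = 1 / sqrt (real M)" using M by (simp add: powr_minus_divide powr_half_sqrt)
    finally show ?thesis .
  qed
  ultimately show ?thesis by simp
qed

lemma aux_sq: "(p::real) > 0 \<Longrightarrow> q > 0 \<Longrightarrow> (p^2)*w/(p/q) = w*p*q" by (simp add: field_simps power2_eq_square)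

lemma arg_eq:
  assumes "\<beta>' > 0" "M > 0"
  shows "real M * b / sqrt (real M * (1/\<beta>')) = b * sqrt (real M) * sqrt \<beta>'"
proof -
  have h: "sqrt (real M * (1/\<beta>')) = sqrt (real M) / sqrt \<beta>'" by (simp add: real_sqrt_mult real_sqrt_divide)
  have M': "real M = (sqrt (real M))^2" by simp
  show ?thesis unfolding h apply (subst (1) M') by (rule aux_sq) (use assms in auto)
qed

lemma part1:
  fixes b \<beta> \<beta>' :: real
  assumes bp: "b > 0" and h: "0 < \<beta>" "\<beta> \<le> \<beta>'" "\<beta> / \<beta>' \<ge> real CARD('n) powr (- 1 / real CARD('n))"
  shows "(LINT z:(A2 :: (real^'n) set)|lborel.
              min (mvn_density z (b *\<^sub>R ones) ((1 / \<beta>) *\<^sub>R mat 1))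
                  (mvn_density z (b *\<^sub>R ones) ((1 / \<beta>') *\<^sub>R mat 1)))
            \<ge> 1 / sqrt (real CARD('n)) * std_normal_cdf (b * sqrt (real CARD('n)) * sqrt \<beta>')
          \<and> 1 / sqrt (real CARD('n)) * std_normal_cdf (b * sqrt (real CARD('n)) * sqrt \<beta>')
            \<ge> 1 / (2 * sqrt (real CARD('n)))"
proof -
  have b': "\<beta>' > 0" using h by simp
  let ?P = "std_normal_cdf (b * sqrt (real CARD('n)) * sqrt \<beta>')"
  have Pge: "?P \<ge> 1/2" using bp b' by (intro Phi_ge_half) simp
  have ci: "(LINT z:(A2 :: (real^'n) set)|lborel.
              min (mvn_density z (b *\<^sub>R ones) ((1 / \<beta>) *\<^sub>R mat 1))
                  (mvn_density z (b *\<^sub>R ones) ((1 / \<beta>') *\<^sub>R mat 1)))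
        \<ge> (\<beta>/\<beta>') powr (real CARD('n)/2) * ?P"
    using core_integral(2)[OF h(1,2) A2_borel, of b, where 'n='n] gauss_facts(2)[of "1/\<beta>'" b, where 'n='n] b'
      arg_eq[OF b', of "CARD('n)" b] by simp
  have "(\<beta>/\<beta>') powr (real CARD('n)/2) * ?P \<ge> 1 / sqrt (real CARD('n)) * ?P"
    using r_bound[OF h(1,2), of "CARD('n)"] h(3) Pge by (intro mult_right_mono) auto
  moreover have "1 / sqrt (real CARD('n)) * ?P \<ge> 1 / (2 * sqrt (real CARD('n)))"
    using Pge by (simp add: field_simps)
  ultimately show ?thesis using ci by linarith
qed

lemma beta_facts:
  assumes M: "M \<ge> 1" and k: "k < M"
  shows "beta_seq M k > 0" "beta_seq M k \<le> beta_seq M (Suc k)"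
    "beta_seq M k / beta_seq M (Suc k) = real M powr (- 1 / real M)"
proof -
  show "beta_seq M k > 0" using M by (simp add: beta_seq_def)
  show "beta_seq M k \<le> beta_seq M (Suc k)"
    unfolding beta_seq_def using M by (intro powr_mono) (auto simp: divide_right_mono)
  have "beta_seq M k / beta_seq M (Suc k) = real M powr ((- (real M - real k) / real M) - (- (real M - real (Suc k)) / real M))"
    unfolding beta_seq_def using M by (simp add: powr_diff)
  also have "(- (real M - real k) / real M) - (- (real M - real (Suc k)) / real M) = - 1 / real M"
    using M by (simp add: field_simps)
  finally show "beta_seq M k / beta_seq M (Suc k) = real M powr (- 1 / real M)" .
qed

lemma pi_k_eq:
  assumes bp: "beta_seq CARD('n) k > 0"
  shows "pi_k b k (z::real^'n) = gfun b (beta_seq CARD('n) k) z /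
     (2 * std_normal_cdf (real CARD('n) * b / sqrt (real CARD('n) * (1 / beta_seq CARD('n) k))))"
proof -
  let ?\<beta> = "beta_seq CARD('n) k"
  have e: "(\<lambda>y::real^'n. tilde_pi b y powr ?\<beta>) = (\<lambda>y. Kc CARD('n) ?\<beta> * gfun b ?\<beta> y)"
    using tilde_pow[OF bp] by auto
  have "(LINT y|lborel. tilde_pi b (y::real^'n) powr ?\<beta>) = Kc CARD('n) ?\<beta> * (LINT y|lborel. gfun b ?\<beta> (y::real^'n))"
    unfolding e by simp
  thus ?thesis unfolding pi_k_def tilde_pow[OF bp] gfun_int(2)[OF bp] using Kc_pos[OF bp, of "CARD('n)"]
    by simp
qed

lemma part2:
  fixes b :: real
  assumes bp: "b > 0" and k: "k < CARD('n)"
  shows "(LINT z|lborel. min (pi_k b k z) (pi_k b (Suc k) (z :: real^'n)))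
            \<ge> 1 / (2 * sqrt (real CARD('n)))"
proof -
  have M1: "CARD('n) \<ge> 1" by (simp add: Suc_leI)
  define \<beta> where "\<beta> = beta_seq CARD('n) k"
  define \<beta>' where "\<beta>' = beta_seq CARD('n) (Suc k)"
  have bb: "\<beta> > 0" "\<beta> \<le> \<beta>'" "\<beta>/\<beta>' = real CARD('n) powr (- 1 / real CARD('n))"
    using beta_facts[OF M1 k] by (simp_all add: \<beta>_def \<beta>'_def)
  have b'p: "\<beta>' > 0" using bb by simp
  define u where "u = std_normal_cdf (real CARD('n) * b / sqrt (real CARD('n) * (1 / \<beta>)))"
  define u' where "u' = std_normal_cdf (real CARD('n) * b / sqrt (real CARD('n) * (1 / \<beta>')))"
  have u: "u \<ge> 1/2" "u \<le> 1" "u' \<ge> 1/2" "u' \<le> 1"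
    unfolding u_def u'_def
    by (rule Phi_ge_half, use bp bb in simp, rule Phi_le1, rule Phi_ge_half, use bp b'p in simp, rule Phi_le1)
  let ?g = "gfun b \<beta> :: real^'n \<Rightarrow> real"
  let ?g' = "gfun b \<beta>' :: real^'n \<Rightarrow> real"
  have pk: "pi_k b k z = ?g z / (2*u)" for z :: "real^'n"
    unfolding u_def \<beta>_def by (rule pi_k_eq) (use bb in \<open>simp add: \<beta>_def\<close>)
  have pk': "pi_k b (Suc k) z = ?g' z / (2*u')" for z :: "real^'n"
    unfolding u'_def \<beta>'_def by (rule pi_k_eq) (use b'p in \<open>simp add: \<beta>'_def\<close>)
  have ig: "integrable lborel ?g" by (rule gfun_int(1)[OF bb(1)])
  have ig': "integrable lborel ?g'" by (rule gfun_int(1)[OF b'p])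
  have lo: "min (?g z) (?g' z) / 2 \<le> min (pi_k b k z) (pi_k b (Suc k) z)" for z
  proof -
    have "?g z / 2 \<le> ?g z / (2*u)"
      using u gfun_nonneg[OF bb(1), of b z] by (intro divide_left_mono) auto
    moreover have "?g' z / 2 \<le> ?g' z / (2*u')"
      using u gfun_nonneg[OF b'p, of b z] by (intro divide_left_mono) auto
    ultimately show ?thesis unfolding pk pk' by linarith
  qed
  have split: "min (?g z) (?g' z) =
      min (mvn_density z ((-b) *\<^sub>R ones) ((1/\<beta>) *\<^sub>R mat 1)) (mvn_density z ((-b) *\<^sub>R ones) ((1/\<beta>') *\<^sub>R mat 1)) * indicator A1 z
    + min (mvn_density z (b *\<^sub>R ones) ((1/\<beta>) *\<^sub>R mat 1)) (mvn_density z (b *\<^sub>R ones) ((1/\<beta>') *\<^sub>R mat 1)) * indicator A2 z"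
    for z :: "real^'n"
    by (cases "z \<in> A2") (auto simp: gfun_def A1_def)
  note s1 = core_integral[OF bb(1,2) A1_borel, of "-b", where 'n='n]
  note s2 = core_integral[OF bb(1,2) A2_borel, of "b", where 'n='n]
  have I1: "(LINT z:(A1::(real^'n) set)|lborel. mvn_density z ((-b) *\<^sub>R ones) ((1/\<beta>') *\<^sub>R mat 1)) = u'"
    using gauss_facts(3)[of "1/\<beta>'" "-b", where 'n='n] b'p unfolding u'_def by simp
  have I2: "(LINT z:(A2::(real^'n) set)|lborel. mvn_density z (b *\<^sub>R ones) ((1/\<beta>') *\<^sub>R mat 1)) = u'"
    using gauss_facts(2)[of "1/\<beta>'" "b", where 'n='n] b'p unfolding u'_def by simp
  define r where "r = (\<beta>/\<beta>') powr (real CARD('n)/2)"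
  have r: "r \<ge> 1 / sqrt (real CARD('n))" unfolding r_def using r_bound[OF bb(1,2), of "CARD('n)"] bb(3) M1 by simp
  have "(\<integral>z. min (?g z) (?g' z) \<partial>lborel)
       = (LINT z:(A1::(real^'n) set)|lborel. min (mvn_density z ((-b) *\<^sub>R ones) ((1/\<beta>) *\<^sub>R mat 1)) (mvn_density z ((-b) *\<^sub>R ones) ((1/\<beta>') *\<^sub>R mat 1)))
       + (LINT z:(A2::(real^'n) set)|lborel. min (mvn_density z (b *\<^sub>R ones) ((1/\<beta>) *\<^sub>R mat 1)) (mvn_density z (b *\<^sub>R ones) ((1/\<beta>') *\<^sub>R mat 1)))"
    unfolding split set_to_mult
    by (rule Bochner_Integration.integral_add; rule set_integrable_to_mult) (use s1 s2 in auto)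
  also have "\<dots> \<ge> r * u' + r * u'"
    using s1(2) s2(2) I1 I2 unfolding r_def by (intro add_mono) auto
  finally have gm: "(\<integral>z. min (?g z) (?g' z) \<partial>lborel) \<ge> 2 * r * u'" by simp
  have "(\<integral>z. min (?g z) (?g' z) / 2 \<partial>lborel) \<le> (LINT z|lborel. min (pi_k b k z) (pi_k b (Suc k) (z :: real^'n)))"
  proof (rule integral_mono)
    show "integrable lborel (\<lambda>z. min (?g z) (?g' z) / 2)" using ig ig' by auto
    show "integrable lborel (\<lambda>z. min (pi_k b k z) (pi_k b (Suc k) (z :: real^'n)))"
      unfolding pk pk' using ig ig' by auto
  qed (rule lo)
  moreover have "(\<integral>z. min (?g z) (?g' z) / 2 \<partial>lborel) = (\<integral>z. min (?g z) (?g' z) \<partial>lborel) / 2" by simp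
  ultimately have X: "(LINT z|lborel. min (pi_k b k z) (pi_k b (Suc k) (z :: real^'n))) \<ge> r * u'"
    using gm by linarith
  have "r * u' \<ge> 1 / sqrt (real CARD('n)) * (1/2)"
    using r u by (intro mult_mono) (auto simp: r_def)
  moreover have "1 / sqrt (real CARD('n)) * (1/2) = 1 / (2 * sqrt (real CARD('n)))" by simp
  ultimately show ?thesis using X by (metis order_trans)
qed

theorem mainTheorem11:
  fixes b :: real
  assumes "b > 0"
  shows "(\<forall>\<beta> \<beta>'. 0 < \<beta> \<and> \<beta> \<le> \<beta>' \<and>
            \<beta> / \<beta>' \<ge> real CARD('n) powr (- 1 / real CARD('n)) \<longrightarrow>
          (LINT z:(A2 :: (real^'n) set)|lborel.
              min (mvn_density z (b *\<^sub>R ones) ((1 / \<beta>) *\<^sub>R mat 1))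
                  (mvn_density z (b *\<^sub>R ones) ((1 / \<beta>') *\<^sub>R mat 1)))
            \<ge> 1 / sqrt (real CARD('n)) * std_normal_cdf (b * sqrt (real CARD('n)) * sqrt \<beta>')
          \<and> 1 / sqrt (real CARD('n)) * std_normal_cdf (b * sqrt (real CARD('n)) * sqrt \<beta>')
            \<ge> 1 / (2 * sqrt (real CARD('n))))
       \<and> (\<forall>k < CARD('n).
          (LINT z|lborel. min (pi_k b k z) (pi_k b (Suc k) (z :: real^'n)))
            \<ge> 1 / (2 * sqrt (real CARD('n))))"
  using part1[OF assms] part2[OF assms] by blast


end
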